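(* Let $k\ge1$ and let $X,Y$ be $k$-good random valuations with $\|X\|_1\le M$ and $\|Y\|_1\le M$ almost surely, for some $M\ge1$. Then \[ |\textsc{Rev}(X)-\textsc{Rev}(Y)|\le(2M+1)\sqrt{\mathrm{Dist}(X,Y)} . \]
   Context: $\|x\|_1=\sum_i|x_i|$. $\mathrm{Dist}(X,Y)$ is the Prohorov distance between the distributions of $X$ and $Y$ with respect to $\|\cdot\|_1$: the infimum of all $\rho>0$ such that $\mathbb{P}[X\in A]\le\mathbb{P}[Y\in B_\rho(A)]+\rho$ and $\mathbb{P}[Y\in A]\le\mathbb{P}[X\in B_\rho(A)]+\rho$ for all measurable $A$, where $B_\rho(A)=\{y:\|y-x\|_1<\rho\text{ for some }x\in A\}$. A $k$-good random valuation is a random vector in $\mathbb{R}_+^k$ (no independence assumed). A mechanism is a pair $\mu=(q,s)$ of Borel functions $q:\mathbb{R}_+^k\to[0,1]^k$, $s:\mathbb{R}_+^k\to\mathbb{R}$, with buyer payoff $b(x)=q(x)\cdot x-s(x)$; IR: $b(x)\ge0$ for all $x$; IC: $b(x)\ge q(\tilde x)\cdot x-s(\tilde x)$ for all $x,\tilde x$. $\textsc{Rev}(X)=\sup\mathbb{E}[s(X)]$ over all IC and IR mechanisms. *)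

theory Defs
  imports "HOL-Probability.Probability"
begin

text \<open>Valuations in R_+^k are modelled as vectors of type real^'k, 'k a finite
  (nonempty) index type, so k = CARD('k) \<ge> 1.\<close>

definition norm1 :: "real^'k \<Rightarrow> real" where
  "norm1 x = (\<Sum>i\<in>UNIV. \<bar>x $ i\<bar>)"

definition nonneg_orthant :: "(real^'k) set" where
  "nonneg_orthant = {x. \<forall>i. 0 \<le> x $ i}"

definition good_random_valuation :: "'w measure \<Rightarrow> ('w \<Rightarrow> real^'k) \<Rightarrow> bool" where
  "good_random_valuation Omega X \<longleftrightarrow>
     prob_space Omega \<and> X \<in> borel_measurable Omega \<and> (\<forall>w\<in>space Omega. X w \<in> nonneg_orthant)"

definition buyer_payoff :: "(real^'k \<Rightarrow> real^'k) \<Rightarrow> (real^'k \<Rightarrow> real) \<Rightarrow> real^'k \<Rightarrow> real" where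
  "buyer_payoff q s x = q x \<bullet> x - s x"

definition IC_IR_mechanism :: "(real^'k \<Rightarrow> real^'k) \<Rightarrow> (real^'k \<Rightarrow> real) \<Rightarrow> bool" where
  "IC_IR_mechanism q s \<longleftrightarrow>
     q \<in> borel_measurable borel \<and> s \<in> borel_measurable borel \<and>
     (\<forall>x\<in>nonneg_orthant. \<forall>i. 0 \<le> q x $ i \<and> q x $ i \<le> 1) \<and>
     (\<forall>x\<in>nonneg_orthant. buyer_payoff q s x \<ge> 0) \<and>
     (\<forall>x\<in>nonneg_orthant. \<forall>y\<in>nonneg_orthant. buyer_payoff q s x \<ge> q y \<bullet> x - s y)"

text \<open>Rev(X) = sup of the expected revenue E[s(X)] over IC and IR mechanisms
  (for which s(X) is integrable; under a.s. boundedness of X this is automatic).\<close>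
definition Rev :: "'w measure \<Rightarrow> ('w \<Rightarrow> real^'k) \<Rightarrow> real" where
  "Rev Omega X = Sup {(\<integral>w. s (X w) \<partial>Omega) | q s.
       IC_IR_mechanism q s \<and> integrable Omega (\<lambda>w. s (X w))}"

definition ball1 :: "real \<Rightarrow> (real^'k) set \<Rightarrow> (real^'k) set" where
  "ball1 \<rho> A = {y. \<exists>x\<in>A. norm1 (y - x) < \<rho>}"

definition prohorov :: "(real^'k) measure \<Rightarrow> (real^'k) measure \<Rightarrow> real" where
  "prohorov P Q = Inf {\<rho>. \<rho> > 0 \<and> (\<forall>A\<in>sets borel.
       measure P A \<le> measure Q (ball1 \<rho> A) + \<rho> \<and>
       measure Q A \<le> measure P (ball1 \<rho> A) + \<rho>)}"

definition Dist :: "'w measure \<Rightarrow> ('w \<Rightarrow> real^'k) \<Rightarrow> 'v measure \<Rightarrow> ('v \<Rightarrow> real^'k) \<Rightarrow> real" where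
  "Dist Omega1 X Omega2 Y = prohorov (distr Omega1 borel X) (distr Omega2 borel Y)"

end

theory Submission
  imports Defs
begin

lemma inner_le_norm1:
  fixes a v :: "real^'k"
  assumes "\<And>i. \<bar>a $ i\<bar> \<le> c"
  shows "\<bar>a \<bullet> v\<bar> \<le> c * norm1 v"
proof -
  have "\<bar>a \<bullet> v\<bar> = \<bar>\<Sum>i\<in>UNIV. a $ i * v $ i\<bar>" by (simp add: inner_vec_def)
  also have "\<dots> \<le> (\<Sum>i\<in>UNIV. \<bar>a $ i * v $ i\<bar>)" by (rule sum_abs)
  also have "\<dots> \<le> (\<Sum>i\<in>UNIV. c * \<bar>v $ i\<bar>)"
    by (rule sum_mono) (simp add: abs_mult assms mult_right_mono)
  also have "\<dots> = c * norm1 v" by (simp add: norm1_def sum_distrib_left)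
  finally show ?thesis .
qed

definition optval :: "real \<Rightarrow> ((real^'k) \<times> real) \<Rightarrow> real^'k \<Rightarrow> real" where
  "optval e p x = fst p \<bullet> x - (1 - e) * snd p"

definition pick :: "real \<Rightarrow> ((real^'k) \<times> real) list \<Rightarrow> real^'k \<Rightarrow> nat" where
  "pick e os x = (LEAST i. i < length os \<and> (\<forall>j<length os. optval e (os!j) x \<le> optval e (os!i) x))"

definition qn :: "real \<Rightarrow> ((real^'k) \<times> real) list \<Rightarrow> real^'k \<Rightarrow> real^'k" where
  "qn e os x = fst (os ! pick e os x)"

definition sn :: "real \<Rightarrow> ((real^'k) \<times> real) list \<Rightarrow> real^'k \<Rightarrow> real" where
  "sn e os x = (1 - e) * snd (os ! pick e os x)"

lemma exists_argmax:
  fixes f :: "nat \<Rightarrow> real"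
  assumes "n > 0" shows "\<exists>i<n. \<forall>j<n. f j \<le> f i"
proof -
  have "finite (f ` {..<n})" "f ` {..<n} \<noteq> {}" using assms by auto
  then have "Max (f ` {..<n}) \<in> f ` {..<n}" by (rule Max_in)
  then obtain i where i: "i < n" "f i = Max (f ` {..<n})" by auto
  have "\<forall>j<n. f j \<le> f i" using i by (simp add: \<open>finite (f ` {..<n})\<close>)
  then show ?thesis using i by blast
qed

lemma pick_prop:
  assumes "os \<noteq> []"
  shows "pick e os x < length os \<and> (\<forall>j<length os. optval e (os!j) x \<le> optval e (os!pick e os x) x)"
proof -
  obtain i where "i < length os \<and> (\<forall>j<length os. optval e (os!j) x \<le> optval e (os!i) x)"
    using exists_argmax[of "length os" "\<lambda>j. optval e (os!j) x"] assms by auto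
  then show ?thesis unfolding pick_def by (rule LeastI)
qed

lemma pick_meas: "pick e os \<in> measurable borel (count_space UNIV)"
  unfolding pick_def optval_def by measurable

lemma qn_meas: "qn e os \<in> borel_measurable borel"
proof -
  have "(\<lambda>i. fst (os ! i)) \<in> measurable (count_space UNIV) borel" by simp
  from measurable_compose[OF pick_meas[of e os] this] show ?thesis unfolding qn_def comp_def by simp
qed

lemma sn_meas: "sn e os \<in> borel_measurable borel"
proof -
  have "(\<lambda>i. (1-e) * snd (os ! i)) \<in> measurable (count_space UNIV) borel" by simp
  from measurable_compose[OF pick_meas[of e os] this] show ?thesis unfolding sn_def comp_def by simp
qed

lemma mech_ok:
  fixes os :: "((real^'k) \<times> real) list"
  assumes ne: "os \<noteq> []"
    and q01: "\<And>p i. p \<in> set os \<Longrightarrow> 0 \<le> fst p $ i \<and> fst p $ i \<le> 1"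
    and zero: "p0 \<in> set os" "snd p0 = 0"
  shows "IC_IR_mechanism (qn e os) (sn e os)"
  unfolding IC_IR_mechanism_def
proof (intro conjI ballI allI)
  show "qn e os \<in> borel_measurable borel" by (rule qn_meas)
  show "sn e os \<in> borel_measurable borel" by (rule sn_meas)
  fix x :: "real^'k" assume x: "x \<in> nonneg_orthant"
  have pp: "pick e os x < length os" using pick_prop[OF ne] by blast
  then have mem: "os ! pick e os x \<in> set os" by simp
  fix i
  show "0 \<le> qn e os x $ i" "qn e os x $ i \<le> 1" using q01[OF mem] unfolding qn_def by auto
next
  fix x :: "real^'k" assume x: "x \<in> nonneg_orthant"
  obtain j where j: "j < length os" "os ! j = p0" using zero(1) by (auto simp: in_set_conv_nth)
  have "optval e (os!j) x \<le> optval e (os!pick e os x) x" using pick_prop[OF ne] j by blast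
  moreover have "0 \<le> fst p0 \<bullet> x" unfolding inner_vec_def using q01[OF zero(1)] x
    by (auto simp: nonneg_orthant_def intro!: sum_nonneg)
  ultimately show "0 \<le> buyer_payoff (qn e os) (sn e os) x"
    using j zero unfolding buyer_payoff_def optval_def qn_def sn_def by auto
next
  fix x y :: "real^'k" assume x: "x \<in> nonneg_orthant" and y: "y \<in> nonneg_orthant"
  have "pick e os y < length os" using pick_prop[OF ne] by blast
  then have "optval e (os!pick e os y) x \<le> optval e (os!pick e os x) x" using pick_prop[OF ne] by blast
  then show "qn e os y \<bullet> x - sn e os y \<le> buyer_payoff (qn e os) (sn e os) x"
    unfolding buyer_payoff_def optval_def qn_def sn_def by auto
qed

lemma norm1_nonneg: "0 \<le> norm1 x"
  unfolding norm1_def by (simp add: sum_nonneg)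

lemma key_pointwise:
  fixes os :: "((real^'k) \<times> real) list" and x y qy :: "real^'k"
  assumes ne: "os \<noteq> []"
    and q01: "\<And>p i. p \<in> set os \<Longrightarrow> 0 \<le> fst p $ i \<and> fst p $ i \<le> 1"
    and qy01: "\<And>i. 0 \<le> qy $ i \<and> qy $ i \<le> 1"
    and IC: "\<And>p. p \<in> set os \<Longrightarrow> fst p \<bullet> y - snd p \<le> qy \<bullet> y - sy"
    and u: "u \<in> set os" "\<And>i. \<bar>fst u $ i - qy $ i\<bar> \<le> \<eta>" "\<bar>snd u - sy\<bar> \<le> \<eta>"
    and e: "0 < e" "e < 1" and sy: "sy \<le> M" and xM: "norm1 x \<le> M"
    and xy: "norm1 (x - y) < \<rho>" and eta: "0 \<le> \<eta>"
  shows "sy - e * M - (\<rho> + \<eta> * (1 + M)) / e \<le> sn e os x"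
proof -
  define z where "z = os ! pick e os x"
  have pz: "pick e os x < length os" using pick_prop[OF ne] by blast
  have zin: "z \<in> set os" unfolding z_def using pz by simp
  obtain j where j: "j < length os" "os ! j = u" using u(1) by (auto simp: in_set_conv_nth)
  have h1: "optval e u x \<le> optval e z x" using pick_prop[OF ne, of e x] j unfolding z_def by metis
  have h2: "fst z \<bullet> y - snd z \<le> qy \<bullet> y - sy" using IC[OF zin] .
  have h3: "\<bar>(fst z - qy) \<bullet> (x - y)\<bar> \<le> 1 * norm1 (x - y)"
  proof (rule inner_le_norm1)
    fix i
    have "0 \<le> fst z $ i" "fst z $ i \<le> 1" using q01[OF zin] by auto
    moreover have "0 \<le> qy $ i" "qy $ i \<le> 1" using qy01 by auto
    ultimately show "\<bar>(fst z - qy) $ i\<bar> \<le> 1" by (simp add: abs_le_iff)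
  qed
  have h4: "\<bar>(qy - fst u) \<bullet> x\<bar> \<le> \<eta> * norm1 x"
    by (rule inner_le_norm1) (use u(2) in \<open>simp add: abs_minus_commute\<close>)
  have h5: "\<eta> * norm1 x \<le> \<eta> * M" using xM eta by (simp add: mult_left_mono)
  have dec: "fst z \<bullet> x - fst u \<bullet> x = (fst z - qy) \<bullet> (x - y) + (fst z \<bullet> y - qy \<bullet> y) + (qy - fst u) \<bullet> x"
    by (simp add: inner_diff_left inner_diff_right)
  have h6: "(1 - e) * snd u \<le> (1 - e) * sy + \<eta>"
  proof -
    have "(1 - e) * snd u \<le> (1 - e) * (sy + \<eta>)" using u(3) e by (intro mult_left_mono) auto
    also have "\<dots> \<le> (1 - e) * sy + \<eta>" using e eta by (simp add: algebra_simps mult_left_le_one_le)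
    finally show ?thesis .
  qed
  have "e * snd z \<ge> e * sy - (\<rho> + \<eta> * (1 + M))"
    using h1 h2 h3 h4 h5 h6 dec xy unfolding optval_def by (simp add: algebra_simps abs_le_iff)
  then have sz: "snd z \<ge> sy - (\<rho> + \<eta> * (1 + M)) / e"
    using e by (simp add: field_simps)
  have c0: "0 \<le> (\<rho> + \<eta> * (1 + M)) / e"
    using e eta norm1_nonneg[of "x - y"] xy norm1_nonneg[of x] xM by (intro divide_nonneg_pos) auto
  have "(1 - e) * (sy - (\<rho> + \<eta> * (1 + M)) / e) \<le> (1 - e) * snd z"
    using sz e by (intro mult_left_mono) auto
  moreover have "sy - e * M - (\<rho> + \<eta> * (1 + M)) / e \<le> (1 - e) * (sy - (\<rho> + \<eta> * (1 + M)) / e)"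
  proof -
    define c where "c = (\<rho> + \<eta> * (1 + M)) / e"
    have "e * sy \<le> e * M" using e sy by simp
    moreover have "e * c \<ge> 0" using c0 e unfolding c_def by (intro mult_nonneg_nonneg) auto
    moreover have "(1 - e) * (sy - c) = sy - c - e * sy + e * c" by (simp add: algebra_simps)
    ultimately show ?thesis unfolding c_def[symmetric] by linarith
  qed
  ultimately show ?thesis unfolding sn_def z_def by linarith
qed

lemma finite_net:
  fixes S :: "((real^'k) \<times> real) set"
  assumes "bounded S" "0 < \<eta>"
  shows "\<exists>F. finite F \<and> F \<subseteq> S \<and> (\<forall>p\<in>S. \<exists>u\<in>F. dist u p < \<eta>)"
proof -
  have cpt: "compact (closure S)" using assms(1) by (simp add: compact_closure)
  have "closure S \<subseteq> (\<Union>c\<in>S. ball c \<eta>)"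
  proof
    fix x assume "x \<in> closure S"
    then obtain y where "y \<in> S" "dist y x < \<eta>" using assms(2) closure_approachable by blast
    then show "x \<in> (\<Union>c\<in>S. ball c \<eta>)" by auto
  qed
  then obtain C' where C': "C' \<subseteq> S" "finite C'" "closure S \<subseteq> (\<Union>c\<in>C'. ball c \<eta>)"
    using compactE_image[OF cpt, of S "\<lambda>c. ball c \<eta>"] by auto
  have "\<forall>p\<in>S. \<exists>u\<in>C'. dist u p < \<eta>" using C'(3) closure_subset by fastforce
  then show ?thesis using C' by blast
qed

lemma dist_pair_comp:
  fixes u p :: "(real^'k) \<times> real"
  assumes "dist u p < \<eta>"
  shows "\<bar>fst u $ i - fst p $ i\<bar> \<le> \<eta>" "\<bar>snd u - snd p\<bar> \<le> \<eta>"
proof -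
  have "\<bar>fst u $ i - fst p $ i\<bar> \<le> dist (fst u) (fst p)"
    using component_le_norm_cart[of "fst u - fst p" i] by (simp add: dist_norm)
  also have "\<dots> \<le> dist u p" by (rule dist_fst_le)
  finally show "\<bar>fst u $ i - fst p $ i\<bar> \<le> \<eta>" using assms by simp
  have "\<bar>snd u - snd p\<bar> = dist (snd u) (snd p)" by (simp add: dist_real_def)
  also have "\<dots> \<le> dist u p" by (rule dist_snd_le)
  finally show "\<bar>snd u - snd p\<bar> \<le> \<eta>" using assms by simp
qed

lemma bounded_opts:
  fixes S :: "((real^'k) \<times> real) set"
  assumes "\<And>p i. p \<in> S \<Longrightarrow> 0 \<le> fst p $ i \<and> fst p $ i \<le> 1"
    and "\<And>p. p \<in> S \<Longrightarrow> 0 \<le> snd p \<and> snd p \<le> M"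
  shows "bounded S"
  unfolding bounded_iff
proof (intro exI ballI)
  fix p assume p: "p \<in> S"
  have "norm (fst p) \<le> (\<Sum>i\<in>UNIV. \<bar>fst p $ i\<bar>)" by (rule norm_le_l1_cart)
  also have "\<dots> \<le> (\<Sum>i\<in>(UNIV::'k set). 1)" using assms(1)[OF p] by (intro sum_mono) auto
  finally have a: "norm (fst p) \<le> real CARD('k)" by simp
  have b: "norm (snd p) \<le> M" using assms(2)[OF p] by simp
  have "norm p = norm (fst p, snd p)" by simp
  also have "\<dots> \<le> norm (fst p) + norm (snd p)" by (rule norm_Pair_le)
  finally show "norm p \<le> real CARD('k) + M" using a b by linarith
qed

lemma ICIR_facts:
  assumes m: "IC_IR_mechanism q s" and y: "y \<in> nonneg_orthant"
  shows "0 \<le> s y - s 0" "s y - s 0 \<le> norm1 y"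
    "\<And>i. 0 \<le> q y $ i \<and> q y $ i \<le> 1"
    "\<And>z. z \<in> nonneg_orthant \<Longrightarrow> q z \<bullet> y - (s z - s 0) \<le> q y \<bullet> y - (s y - s 0)"
proof -
  have z0: "0 \<in> nonneg_orthant" by (simp add: nonneg_orthant_def)
  from m have ic: "\<And>x z. x \<in> nonneg_orthant \<Longrightarrow> z \<in> nonneg_orthant \<Longrightarrow> q z \<bullet> x - s z \<le> q x \<bullet> x - s x"
    and qb: "\<And>x i. x \<in> nonneg_orthant \<Longrightarrow> 0 \<le> q x $ i \<and> q x $ i \<le> 1"
    unfolding IC_IR_mechanism_def buyer_payoff_def by auto
  show "0 \<le> s y - s 0" using ic[OF z0 y] by simp
  have "0 \<le> q 0 \<bullet> y" unfolding inner_vec_def using qb[OF z0] y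
    by (auto simp: nonneg_orthant_def intro!: sum_nonneg)
  moreover have "\<bar>q y \<bullet> y\<bar> \<le> 1 * norm1 y"
    by (rule inner_le_norm1) (use qb[OF y] in \<open>simp add: abs_le_iff\<close>)
  ultimately show "s y - s 0 \<le> norm1 y" using ic[OF y z0] by (simp add: abs_le_iff)
  show "\<And>i. 0 \<le> q y $ i \<and> q y $ i \<le> 1" using qb[OF y] .
  show "\<And>z. z \<in> nonneg_orthant \<Longrightarrow> q z \<bullet> y - (s z - s 0) \<le> q y \<bullet> y - (s y - s 0)"
    using ic[OF y] by simp
qed

lemma approx_mech:
  fixes q :: "real^'k \<Rightarrow> real^'k" and s :: "real^'k \<Rightarrow> real"
  assumes m: "IC_IR_mechanism q s" and e: "0 < e" "e < 1" and eta: "0 < \<eta>" and M: "0 \<le> M"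
  obtains os where "IC_IR_mechanism (qn e os) (sn e os)"
    and "\<And>x. 0 \<le> sn e os x \<and> sn e os x \<le> M"
    and "\<And>x y \<rho>. y \<in> nonneg_orthant \<Longrightarrow> norm1 y \<le> M \<Longrightarrow> norm1 x \<le> M \<Longrightarrow> norm1 (x - y) < \<rho> \<Longrightarrow>
          s y - s 0 - e * M - (\<rho> + \<eta> * (1 + M)) / e \<le> sn e os x"
proof -
  define S where "S = (\<lambda>y. (q y, s y - s 0)) ` {y\<in>nonneg_orthant. norm1 y \<le> M}"
  have Sq: "\<And>p i. p \<in> S \<Longrightarrow> 0 \<le> fst p $ i \<and> fst p $ i \<le> 1"
    unfolding S_def using ICIR_facts(3)[OF m] by auto
  have Ss: "0 \<le> snd p \<and> snd p \<le> M" if pS: "p \<in> S" for p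
  proof -
    obtain y where y: "y \<in> nonneg_orthant" "norm1 y \<le> M" "p = (q y, s y - s 0)"
      using pS unfolding S_def by auto
    show ?thesis using ICIR_facts(1,2)[OF m y(1)] y(2,3) by simp
  qed
  have bS: "bounded S" by (rule bounded_opts[OF Sq Ss])
  have "\<exists>F. finite F \<and> F \<subseteq> S \<and> (\<forall>p\<in>S. \<exists>u\<in>F. dist u p < \<eta>)"
    by (rule finite_net[OF bS eta])
  then obtain F where F: "finite F" "F \<subseteq> S" "\<forall>p\<in>S. \<exists>u\<in>F. dist u p < \<eta>"
    by blast
  have z0: "(0::real^'k) \<in> nonneg_orthant" by (simp add: nonneg_orthant_def)
  have n0: "norm1 (0::real^'k) \<le> M" using M by (simp add: norm1_def)
  have "(q 0, s 0 - s 0) \<in> S" unfolding S_def using z0 n0 by (intro imageI) simp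
  then have p0S: "(q 0, 0) \<in> S" by simp
  obtain os where os: "set os = insert (q 0, 0) F" using finite_list[of "insert (q 0, 0) F"] F(1) by auto
  have osS: "set os \<subseteq> S" using os F(2) p0S by auto
  have ne: "os \<noteq> []" using os by auto
  have q01: "\<And>p i. p \<in> set os \<Longrightarrow> 0 \<le> fst p $ i \<and> fst p $ i \<le> 1" using osS Sq by blast
  show ?thesis
  proof
    show "IC_IR_mechanism (qn e os) (sn e os)"
      by (rule mech_ok[OF ne q01, of "(q 0, 0)"]) (use os in auto)
  next
    fix x
    have "pick e os x < length os" using pick_prop[OF ne] by blast
    then have "os ! pick e os x \<in> S" using osS by auto
    then have "0 \<le> snd (os ! pick e os x) \<and> snd (os ! pick e os x) \<le> M" using Ss by blast
    moreover have "(1 - e) * snd (os ! pick e os x) \<le> snd (os ! pick e os x)"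
      using e calculation by (simp add: mult_left_le_one_le)
    ultimately show "0 \<le> sn e os x \<and> sn e os x \<le> M" unfolding sn_def using e by simp
  next
    fix x y :: "real^'k" and \<rho> :: real
    assume y: "y \<in> nonneg_orthant" and yM: "norm1 y \<le> M" and xM: "norm1 x \<le> M"
      and xy: "norm1 (x - y) < \<rho>"
    have yS: "(q y, s y - s 0) \<in> S" unfolding S_def using y yM by auto
    then obtain u where u: "u \<in> F" "dist u (q y, s y - s 0) < \<eta>" using F(3) by blast
    have uos: "u \<in> set os" using u os by auto
    have IC: "\<And>p. p \<in> set os \<Longrightarrow> fst p \<bullet> y - snd p \<le> q y \<bullet> y - (s y - s 0)"
    proof -
      fix p assume "p \<in> set os"
      then have "p \<in> S" using osS by auto
      then obtain z where "z \<in> nonneg_orthant" "p = (q z, s z - s 0)" unfolding S_def by auto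
      then show "fst p \<bullet> y - snd p \<le> q y \<bullet> y - (s y - s 0)" using ICIR_facts(4)[OF m y] by simp
    qed
    show "s y - s 0 - e * M - (\<rho> + \<eta> * (1 + M)) / e \<le> sn e os x"
    proof (rule key_pointwise[OF ne q01 _ IC uos _ _ e _ xM xy])
      show "\<And>i. 0 \<le> q y $ i \<and> q y $ i \<le> 1" using ICIR_facts(3)[OF m y] .
      show "\<And>i. \<bar>fst u $ i - q y $ i\<bar> \<le> \<eta>" using dist_pair_comp(1)[OF u(2)] by simp
      show "\<bar>snd u - (s y - s 0)\<bar> \<le> \<eta>" using dist_pair_comp(2)[OF u(2)] by simp
      show "s y - s 0 \<le> M" using ICIR_facts(2)[OF m y] yM by simp
      show "0 \<le> \<eta>" using eta by simp
    qed
  qed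
qed

lemma count_lower:
  fixes v h :: real
  assumes "0 \<le> v" "v \<le> real N * h" "0 < h"
  shows "v \<le> h * (\<Sum>j<N. if real j * h < v then 1 else 0)"
  using assms(2)
proof (induction N)
  case 0
  then show ?case using assms(1) by simp
next
  case (Suc N)
  show ?case
  proof (cases "v \<le> real N * h")
    case True
    then have "v \<le> h * (\<Sum>j<N. if real j * h < v then 1 else 0)" by (rule Suc.IH)
    also have "\<dots> \<le> h * (\<Sum>j<Suc N. if real j * h < v then 1 else (0::real))"
      using assms(3) by (intro mult_left_mono) auto
    finally show ?thesis .
  next
    case False
    have "\<forall>j<Suc N. real j * h < v"
    proof (intro allI impI)
      fix j assume "j < Suc N"
      then have "real j * h \<le> real N * h" using assms(3) by (intro mult_right_mono) auto
      then show "real j * h < v" using False by linarith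
    qed
    then have "(\<Sum>j<Suc N. if real j * h < v then 1 else (0::real)) = real (Suc N)" by simp
    then show ?thesis using Suc.prems by (simp add: algebra_simps)
  qed
qed

lemma count_upper:
  fixes w h \<delta> :: real
  assumes "0 \<le> w + \<delta>" "0 < h"
  shows "h * (\<Sum>j<N. if real j * h - \<delta> < w then 1 else 0) \<le> w + \<delta> + h"
proof (induction N)
  case 0
  then show ?case using assms by simp
next
  case (Suc N)
  show ?case
  proof (cases "real N * h - \<delta> < w")
    case False
    then show ?thesis using Suc.IH by simp
  next
    case True
    have "(\<Sum>j<Suc N. if real j * h - \<delta> < w then 1 else (0::real)) \<le> (\<Sum>j<Suc N. 1)"
      by (intro sum_mono) auto
    then have "h * (\<Sum>j<Suc N. if real j * h - \<delta> < w then 1 else (0::real)) \<le> h * real (Suc N)"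
      using assms(2) by (intro mult_left_mono) auto
    also have "\<dots> = real N * h + h" by (simp add: algebra_simps)
    finally show ?thesis using True by linarith
  qed
qed

lemma layer_lower:
  assumes P: "prob_space Om" and f: "f \<in> borel_measurable Om" and "integrable Om f"
    and ae: "AE w in Om. 0 \<le> f w \<and> f w \<le> real N * h" and h: "0 < h"
  shows "integral\<^sup>L Om f \<le> h * (\<Sum>j<N. measure Om {w\<in>space Om. real j * h < f w})"
proof -
  interpret prob_space Om by (rule P)
  define E where "E j = {w\<in>space Om. real j * h < f w}" for j
  have E: "E j \<in> sets Om" for j unfolding E_def using f by measurable
  have ii: "integrable Om (indicator (E j) :: _ \<Rightarrow> real)" for j
    by (intro integrable_real_indicator E) (simp add: less_top[symmetric])
  have ig: "integrable Om (\<lambda>w. h * (\<Sum>j<N. indicator (E j) w))"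
    using ii by (intro integrable_mult_right) (rule Bochner_Integration.integrable_sum)
  have "integral\<^sup>L Om f \<le> integral\<^sup>L Om (\<lambda>w. h * (\<Sum>j<N. indicator (E j) w))"
  proof (rule integral_mono_AE[OF assms(3) ig])
    show "AE w in Om. f w \<le> h * (\<Sum>j<N. indicator (E j) w)"
      using ae AE_space
    proof eventually_elim
      case (elim w)
      have "f w \<le> h * (\<Sum>j<N. if real j * h < f w then 1 else 0)"
        using elim h by (intro count_lower) auto
      also have "(\<Sum>j<N. if real j * h < f w then 1 else 0) = (\<Sum>j<N. indicator (E j) w)"
        using elim by (intro sum.cong refl) (simp add: E_def indicator_def)
      finally show ?case .
    qed
  qed
  also have "\<dots> = h * (\<Sum>j<N. measure Om (E j))"
  proof -
    have "integral\<^sup>L Om (\<lambda>w. \<Sum>j<N. indicator (E j) w) = (\<Sum>j<N. integral\<^sup>L Om (indicator (E j)) :: real)"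
      by (rule Bochner_Integration.integral_sum) (use ii in auto)
    also have "\<dots> = (\<Sum>j<N. measure Om (E j))"
      by (intro sum.cong refl) (simp add: Bochner_Integration.integral_indicator E_def Int_absorb2)
    finally show ?thesis by simp
  qed
  finally show ?thesis unfolding E_def .
qed

lemma layer_upper:
  assumes P: "prob_space Om" and f: "f \<in> borel_measurable Om" and fi: "integrable Om f"
    and ae: "AE w in Om. 0 \<le> f w" and h: "0 < h" and d: "0 \<le> \<delta>"
  shows "h * (\<Sum>j<N. measure Om {w\<in>space Om. real j * h - \<delta> < f w}) \<le> integral\<^sup>L Om f + \<delta> + h"
proof -
  interpret prob_space Om by (rule P)
  define E where "E j = {w\<in>space Om. real j * h - \<delta> < f w}" for j
  have E: "E j \<in> sets Om" for j unfolding E_def using f by measurable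
  have ii: "integrable Om (indicator (E j) :: _ \<Rightarrow> real)" for j
    by (intro integrable_real_indicator E) (simp add: less_top[symmetric])
  have ig: "integrable Om (\<lambda>w. h * (\<Sum>j<N. indicator (E j) w))"
    using ii by (intro integrable_mult_right) (rule Bochner_Integration.integrable_sum)
  have "h * (\<Sum>j<N. measure Om (E j)) = integral\<^sup>L Om (\<lambda>w. h * (\<Sum>j<N. indicator (E j) w))"
  proof -
    have "integral\<^sup>L Om (\<lambda>w. \<Sum>j<N. indicator (E j) w) = (\<Sum>j<N. integral\<^sup>L Om (indicator (E j)) :: real)"
      by (rule Bochner_Integration.integral_sum) (use ii in auto)
    also have "\<dots> = (\<Sum>j<N. measure Om (E j))"
      by (intro sum.cong refl) (simp add: Bochner_Integration.integral_indicator E_def Int_absorb2)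
    finally show ?thesis by simp
  qed
  also have "\<dots> \<le> integral\<^sup>L Om (\<lambda>w. f w + (\<delta> + h))"
  proof (rule integral_mono_AE[OF ig])
    show "integrable Om (\<lambda>w. f w + (\<delta> + h))" using fi by simp
    show "AE w in Om. h * (\<Sum>j<N. indicator (E j) w) \<le> f w + (\<delta> + h)"
      using ae AE_space
    proof eventually_elim
      case (elim w)
      have "(\<Sum>j<N. indicator (E j) w) = (\<Sum>j<N. if real j * h - \<delta> < f w then 1 else (0::real))"
        using elim by (intro sum.cong refl) (simp add: E_def indicator_def)
      also have "h * \<dots> \<le> f w + \<delta> + h"
        using elim h d by (intro count_upper) auto
      finally show ?case by simp
    qed
  qed
  also have "\<dots> = integral\<^sup>L Om f + \<delta> + h" using fi by (simp add: prob_space)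
  finally show ?thesis unfolding E_def .
qed

lemma orthant_closed: "closed (nonneg_orthant :: (real^'k) set)"
proof -
  have eq: "nonneg_orthant = (\<Inter>i. {x::real^'k. 0 \<le> x $ i})" by (auto simp: nonneg_orthant_def)
  have c: "closed {x::real^'k. 0 \<le> x $ i}" for i
    by (intro closed_Collect_le continuous_intros)
  show ?thesis unfolding eq by (intro closed_INT ballI c)
qed

lemma ball1_open: "open (ball1 \<rho> A)"
proof -
  have eq: "ball1 \<rho> A = (\<Union>x\<in>A. {y. norm1 (y - x) < \<rho>})" by (auto simp: ball1_def)
  have c: "open {y. norm1 (y - x) < \<rho>}" for x :: "real^'k"
    unfolding norm1_def by (intro open_Collect_less continuous_intros)
  show ?thesis unfolding eq by (intro open_UN ballI c)
qed

lemma norm1_closed: "closed {y::real^'k. norm1 y \<le> M}"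
  unfolding norm1_def by (intro closed_Collect_le continuous_intros)

lemma upset_borel:
  fixes s :: "real^'k \<Rightarrow> real"
  assumes "s \<in> borel_measurable borel"
  shows "{y::real^'k. y \<in> nonneg_orthant \<and> norm1 y \<le> M \<and> t < s y - s 0} \<in> sets borel"
proof -
  have "{y::real^'k. y \<in> nonneg_orthant \<and> norm1 y \<le> M \<and> t < s y - s 0}
     = nonneg_orthant \<inter> ({y. norm1 y \<le> M} \<inter> {y. t < s y - s 0})" by auto
  moreover have "{y::real^'k. t < s y - s 0} \<in> sets borel"
  proof -
    have "(\<lambda>y. s y - s 0) \<in> borel_measurable borel" using assms by measurable
    then have "{y\<in>space borel. t < s y - s 0} \<in> sets borel"
      unfolding borel_measurable_iff_greater by blast
    then show ?thesis by simp
  qed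
  moreover have "nonneg_orthant \<in> sets borel" by (intro borel_closed orthant_closed)
  moreover have "{y::real^'k. norm1 y \<le> M} \<in> sets borel" by (intro borel_closed norm1_closed)
  ultimately show ?thesis by (metis sets.Int)
qed

lemma rev_set_facts:
  fixes Om :: "'w measure" and X :: "'w \<Rightarrow> real^'k"
  assumes g: "good_random_valuation Om X" and ae: "AE w in Om. norm1 (X w) \<le> M"
  shows "\<And>r. r \<in> {(\<integral>w. s (X w) \<partial>Om) | q s. IC_IR_mechanism q s \<and> integrable Om (\<lambda>w. s (X w))} \<Longrightarrow> r \<le> M"
    and "0 \<in> {(\<integral>w. s (X w) \<partial>Om) | q s. IC_IR_mechanism q s \<and> integrable Om (\<lambda>w. s (X w))}"
proof -
  have P: "prob_space Om" and Xin: "\<And>w. w \<in> space Om \<Longrightarrow> X w \<in> nonneg_orthant"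
    using g unfolding good_random_valuation_def by auto
  interpret prob_space Om by (rule P)
  fix r assume "r \<in> {(\<integral>w. s (X w) \<partial>Om) | q s. IC_IR_mechanism q s \<and> integrable Om (\<lambda>w. s (X w))}"
  then obtain q s where m: "IC_IR_mechanism q s" and i: "integrable Om (\<lambda>w. s (X w))"
    and r: "r = (\<integral>w. s (X w) \<partial>Om)" by auto
  have "(\<integral>w. s (X w) \<partial>Om) \<le> (\<integral>w. M \<partial>Om)"
  proof (rule integral_mono_AE[OF i])
    show "integrable Om (\<lambda>w. M)" by simp
    show "AE w in Om. s (X w) \<le> M" using ae AE_space
    proof eventually_elim
      case (elim w)
      have x: "X w \<in> nonneg_orthant" using Xin elim by auto
      have "0 \<le> q (X w) \<bullet> X w - s (X w)" using m x unfolding IC_IR_mechanism_def buyer_payoff_def by auto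
      moreover have "\<bar>q (X w) \<bullet> X w\<bar> \<le> 1 * norm1 (X w)"
        by (rule inner_le_norm1) (use m x in \<open>auto simp: IC_IR_mechanism_def abs_le_iff\<close>)
      ultimately show ?case using elim by (simp add: abs_le_iff)
    qed
  qed
  then show "r \<le> M" using r by (simp add: prob_space)
next
  have "IC_IR_mechanism (\<lambda>x. 0 :: real^'k) (\<lambda>x. 0)"
    unfolding IC_IR_mechanism_def buyer_payoff_def by auto
  moreover have "integrable Om (\<lambda>w. (\<lambda>x::real^'k. 0::real) (X w))" by simp
  moreover have "(0::real) = (\<integral>w. (\<lambda>x::real^'k. 0::real) (X w) \<partial>Om)" by simp
  ultimately show "0 \<in> {(\<integral>w. s (X w) \<partial>Om) | q s. IC_IR_mechanism q s \<and> integrable Om (\<lambda>w. s (X w))}"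
    unfolding mem_Collect_eq by (intro exI[of _ "\<lambda>x. 0::real^'k"] exI[of _ "\<lambda>x. 0::real"]) simp
qed

lemma rev_bounds:
  fixes Om :: "'w measure" and X :: "'w \<Rightarrow> real^'k"
  assumes g: "good_random_valuation Om X" and ae: "AE w in Om. norm1 (X w) \<le> M"
  shows "0 \<le> Rev Om X" "Rev Om X \<le> M"
    "\<And>q s. IC_IR_mechanism q s \<Longrightarrow> integrable Om (\<lambda>w. s (X w)) \<Longrightarrow> (\<integral>w. s (X w) \<partial>Om) \<le> Rev Om X"
proof -
  note f = rev_set_facts[OF g ae]
  have bdd: "bdd_above {(\<integral>w. s (X w) \<partial>Om) | q s. IC_IR_mechanism q s \<and> integrable Om (\<lambda>w. s (X w))}"
    using f(1) by (intro bdd_aboveI) blast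
  show "0 \<le> Rev Om X" unfolding Rev_def by (rule cSup_upper[OF f(2) bdd])
  show "Rev Om X \<le> M" unfolding Rev_def using f by (intro cSup_least) auto
  fix q s assume "IC_IR_mechanism q s" "integrable Om (\<lambda>w. s (X w))"
  then show "(\<integral>w. s (X w) \<partial>Om) \<le> Rev Om X" unfolding Rev_def
    by (intro cSup_upper[OF _ bdd]) blast
qed

lemma core:
  fixes Om1 :: "'w measure" and Om2 :: "'v measure" and X :: "'w \<Rightarrow> real^'k" and Y :: "'v \<Rightarrow> real^'k"
    and q :: "real^'k \<Rightarrow> real^'k" and s :: "real^'k \<Rightarrow> real"
  assumes gX: "good_random_valuation Om1 X" and gY: "good_random_valuation Om2 Y"
    and M: "1 \<le> M"
    and aeX: "AE w in Om1. norm1 (X w) \<le> M" and aeY: "AE w in Om2. norm1 (Y w) \<le> M"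
    and rho: "0 < \<rho>"
    and proh: "\<And>A. A \<in> sets borel \<Longrightarrow> measure (distr Om2 borel Y) A \<le> measure (distr Om1 borel X) (ball1 \<rho> A) + \<rho>"
    and m: "IC_IR_mechanism q s" and si: "integrable Om2 (\<lambda>w. s (Y w))"
    and e: "0 < e" "e < 1" and eta: "0 < \<eta>" and N: "0 < N"
  shows "(\<integral>w. s (Y w) \<partial>Om2) \<le> Rev Om1 X + (e * M + (\<rho> + \<eta> * (1 + M)) / e) + M / real N + M * \<rho>"
proof -
  have P1: "prob_space Om1" and Xm: "X \<in> borel_measurable Om1"
    and Xin: "\<And>w. w \<in> space Om1 \<Longrightarrow> X w \<in> nonneg_orthant"
    using gX unfolding good_random_valuation_def by auto
  have P2: "prob_space Om2" and Ym: "Y \<in> borel_measurable Om2"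
    and Yin: "\<And>w. w \<in> space Om2 \<Longrightarrow> Y w \<in> nonneg_orthant"
    using gY unfolding good_random_valuation_def by auto
  interpret P1: prob_space Om1 by (rule P1)
  interpret P2: prob_space Om2 by (rule P2)
  have sb: "s \<in> borel_measurable borel" using m unfolding IC_IR_mechanism_def by auto
  have M0: "0 \<le> M" using M by simp
  obtain os where os1: "IC_IR_mechanism (qn e os) (sn e os)"
    and os2: "\<And>x. 0 \<le> sn e os x \<and> sn e os x \<le> M"
    and os3: "\<And>x y \<rho>. y \<in> nonneg_orthant \<Longrightarrow> norm1 y \<le> M \<Longrightarrow> norm1 x \<le> M \<Longrightarrow> norm1 (x - y) < \<rho> \<Longrightarrow>
          s y - s 0 - e * M - (\<rho> + \<eta> * (1 + M)) / e \<le> sn e os x"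
    using approx_mech[OF m e eta M0] by blast
  define \<delta> where "\<delta> = e * M + (\<rho> + \<eta> * (1 + M)) / e"
  define h where "h = M / real N"
  have h: "0 < h" unfolding h_def using M N by simp
  have hN: "real N * h = M" unfolding h_def using N by simp
  have d0: "0 \<le> \<delta>" unfolding \<delta>_def using e eta rho M by (intro add_nonneg_nonneg divide_nonneg_pos) auto
  define sy where "sy w = s (Y w) - s 0" for w
  define sx where "sx w = sn e os (X w)" for w
  have s0: "s 0 \<le> 0"
  proof -
    have "(0::real^'k) \<in> nonneg_orthant" by (simp add: nonneg_orthant_def)
    then show ?thesis using m unfolding IC_IR_mechanism_def buyer_payoff_def by force
  qed
  have sym: "sy \<in> borel_measurable Om2" unfolding sy_def using sb Ym by measurable
  have syi: "integrable Om2 sy" unfolding sy_def using si by simp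
  have sxm: "sx \<in> borel_measurable Om1" unfolding sx_def using sn_meas[of e os] Xm by measurable
  have sxi: "integrable Om1 sx"
    by (rule P1.integrable_const_bound[where B=M]) (use os2 sxm in \<open>auto simp: sx_def\<close>)
  have step1: "(\<integral>w. s (Y w) \<partial>Om2) \<le> integral\<^sup>L Om2 sy"
    using si s0 unfolding sy_def by (simp add: P2.prob_space)
  have step2: "integral\<^sup>L Om2 sy \<le> h * (\<Sum>j<N. measure Om2 {w\<in>space Om2. real j * h < sy w})"
  proof (rule layer_lower[OF P2 sym syi _ h])
    show "AE w in Om2. 0 \<le> sy w \<and> sy w \<le> real N * h"
      using aeY AE_space
    proof eventually_elim
      case (elim w)
      then show ?case using ICIR_facts(1,2)[OF m Yin[of w]] hN unfolding sy_def by auto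
    qed
  qed
  have step3: "measure Om2 {w\<in>space Om2. t < sy w} \<le> measure Om1 {w\<in>space Om1. t - \<delta> < sx w} + \<rho>" for t
  proof -
    define A where "A = {y::real^'k. y \<in> nonneg_orthant \<and> norm1 y \<le> M \<and> t < s y - s 0}"
    have Ab: "A \<in> sets borel" unfolding A_def by (rule upset_borel[OF sb])
    have Bb: "ball1 \<rho> A \<in> sets borel" by (intro borel_open ball1_open)
    have "measure Om2 {w\<in>space Om2. t < sy w} \<le> measure Om2 (Y -` A \<inter> space Om2)"
    proof (rule P2.finite_measure_mono_AE)
      show "Y -` A \<inter> space Om2 \<in> sets Om2" by (rule measurable_sets[OF Ym Ab])
      show "AE w in Om2. w \<in> {w \<in> space Om2. t < sy w} \<longrightarrow> w \<in> Y -` A \<inter> space Om2"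
        using aeY AE_space
      proof eventually_elim
        case (elim w)
        then show ?case using Yin[of w] unfolding A_def sy_def by auto
      qed
    qed
    also have "\<dots> = measure (distr Om2 borel Y) A" by (simp add: measure_distr[OF Ym Ab])
    also have "\<dots> \<le> measure (distr Om1 borel X) (ball1 \<rho> A) + \<rho>" by (rule proh[OF Ab])
    also have "measure (distr Om1 borel X) (ball1 \<rho> A) = measure Om1 (X -` ball1 \<rho> A \<inter> space Om1)"
      by (simp add: measure_distr[OF Xm Bb])
    also have "measure Om1 (X -` ball1 \<rho> A \<inter> space Om1) \<le> measure Om1 {w\<in>space Om1. t - \<delta> < sx w}"
    proof (rule P1.finite_measure_mono_AE)
      show "{w\<in>space Om1. t - \<delta> < sx w} \<in> sets Om1" using sxm by measurable
      show "AE w in Om1. w \<in> X -` ball1 \<rho> A \<inter> space Om1 \<longrightarrow> w \<in> {w\<in>space Om1. t - \<delta> < sx w}"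
        using aeX AE_space
      proof eventually_elim
        case (elim w)
        show ?case
        proof
          assume w: "w \<in> X -` ball1 \<rho> A \<inter> space Om1"
          then obtain y where y: "y \<in> A" "norm1 (X w - y) < \<rho>" unfolding ball1_def by auto
          have "s y - s 0 - e * M - (\<rho> + \<eta> * (1 + M)) / e \<le> sn e os (X w)"
            using y elim unfolding A_def by (intro os3) auto
          then show "w \<in> {w\<in>space Om1. t - \<delta> < sx w}"
            using y w unfolding A_def sx_def \<delta>_def by auto
        qed
      qed
    qed
    finally show ?thesis by simp
  qed
  have step4: "h * (\<Sum>j<N. measure Om2 {w\<in>space Om2. real j * h < sy w})
      \<le> h * (\<Sum>j<N. measure Om1 {w\<in>space Om1. real j * h - \<delta> < sx w}) + M * \<rho>"
  proof -
    have "h * (\<Sum>j<N. measure Om2 {w\<in>space Om2. real j * h < sy w})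
        \<le> h * (\<Sum>j<N. measure Om1 {w\<in>space Om1. real j * h - \<delta> < sx w} + \<rho>)"
      using h step3 by (intro mult_left_mono sum_mono) auto
    also have "\<dots> = h * (\<Sum>j<N. measure Om1 {w\<in>space Om1. real j * h - \<delta> < sx w}) + (real N * h) * \<rho>"
      by (simp add: sum.distrib algebra_simps)
    finally show ?thesis using hN by simp
  qed
  have step5: "h * (\<Sum>j<N. measure Om1 {w\<in>space Om1. real j * h - \<delta> < sx w}) \<le> integral\<^sup>L Om1 sx + \<delta> + h"
    by (rule layer_upper[OF P1 sxm sxi _ h d0]) (use os2 in \<open>simp add: sx_def\<close>)
  have step6: "integral\<^sup>L Om1 sx \<le> Rev Om1 X"
    using rev_bounds(3)[OF gX aeX os1] sxi unfolding sx_def by blast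
  show ?thesis using step1 step2 step4 step5 step6 unfolding \<delta>_def h_def by linarith
qed

lemma one_side:
  fixes Om1 :: "'w measure" and Om2 :: "'v measure" and X :: "'w \<Rightarrow> real^'k" and Y :: "'v \<Rightarrow> real^'k"
  assumes gX: "good_random_valuation Om1 X" and gY: "good_random_valuation Om2 Y"
    and M: "1 \<le> M"
    and aeX: "AE w in Om1. norm1 (X w) \<le> M" and aeY: "AE w in Om2. norm1 (Y w) \<le> M"
    and rho: "0 < \<rho>"
    and proh: "\<And>A. A \<in> sets borel \<Longrightarrow> measure (distr Om2 borel Y) A \<le> measure (distr Om1 borel X) (ball1 \<rho> A) + \<rho>"
  shows "Rev Om2 Y \<le> Rev Om1 X + (2 * M + 1) * sqrt \<rho>"
proof (cases "1/4 \<le> \<rho>")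
  case True
  have "sqrt (1/4) \<le> sqrt \<rho>" using True by (rule real_sqrt_le_mono)
  moreover have "sqrt (1/4::real) = 1/2" by (simp add: real_sqrt_divide)
  ultimately have "1/2 \<le> sqrt \<rho>" by simp
  then have "(2 * M + 1) * (1/2) \<le> (2 * M + 1) * sqrt \<rho>" using M by (intro mult_left_mono) auto
  moreover have "Rev Om2 Y \<le> M" by (rule rev_bounds(2)[OF gY aeY])
  moreover have "0 \<le> Rev Om1 X" by (rule rev_bounds(1)[OF gX aeX])
  ultimately show ?thesis by (simp add: algebra_simps)
next
  case False
  define e where "e = sqrt \<rho>"
  have e0: "0 < e" unfolding e_def using rho by simp
  have e1: "e < 1"
  proof -
    have "sqrt \<rho> < sqrt 1" using False by (intro real_sqrt_less_mono) auto
    then show ?thesis unfolding e_def by simp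
  qed
  have ee: "e * e = \<rho>" unfolding e_def using rho by simp
  have le: "r \<le> Rev Om1 X + (2 * M + 1) * e"
    if r: "r \<in> {(\<integral>w. s (Y w) \<partial>Om2) | q s. IC_IR_mechanism q s \<and> integrable Om2 (\<lambda>w. s (Y w))}" for r
  proof -
    obtain q s where m: "IC_IR_mechanism q s" and si: "integrable Om2 (\<lambda>w. s (Y w))"
      and rr: "r = (\<integral>w. s (Y w) \<partial>Om2)" using r by auto
    show ?thesis
    proof (rule field_le_epsilon)
      fix \<xi> :: real assume xi: "0 < \<xi>"
      define \<eta> where "\<eta> = \<xi> * e / (2 * (1 + M))"
      have eta: "0 < \<eta>" unfolding \<eta>_def using xi e0 M by simp
      obtain N :: nat where Nb: "2 * M / \<xi> < real N" using reals_Archimedean2 by blast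
      have "0 < 2 * M / \<xi>" using M xi by simp
      then have "0 < real N" using Nb by linarith
      then have N: "0 < N" by simp
      have MN: "M / real N \<le> \<xi> / 2"
      proof -
        have "2 * M < \<xi> * real N" using Nb xi by (simp add: field_simps)
        then show ?thesis using N by (simp add: field_simps)
      qed
      have c: "r \<le> Rev Om1 X + (e * M + (\<rho> + \<eta> * (1 + M)) / e) + M / real N + M * \<rho>"
        unfolding rr by (rule core[OF gX gY M aeX aeY rho proh m si e0 e1 eta N])
      have t0: "\<eta> * (1 + M) = \<xi> * e / 2" unfolding \<eta>_def using M by (simp add: field_simps)
      have t1: "(\<rho> + \<eta> * (1 + M)) / e = e + \<xi> / 2"
        unfolding t0 ee[symmetric] using e0 by (simp add: field_simps)
      have t2: "M * \<rho> \<le> M * e"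
      proof -
        have "e * e \<le> 1 * e" using e0 e1 by (intro mult_right_mono) auto
        then have "\<rho> \<le> e" using ee by simp
        then show ?thesis using M by (intro mult_left_mono) auto
      qed
      show "r \<le> Rev Om1 X + (2 * M + 1) * e + \<xi>"
      proof -
        have "(2 * M + 1) * e = 2 * (M * e) + e" "e * M = M * e" by (simp_all add: algebra_simps)
        then show ?thesis using c[unfolded t1] t2 MN by linarith
      qed
    qed
  qed
  have ne: "{(\<integral>w. s (Y w) \<partial>Om2) | q s. IC_IR_mechanism q s \<and> integrable Om2 (\<lambda>w. s (Y w))} \<noteq> {}"
    using rev_set_facts(2)[OF gY aeY] by blast
  have "Rev Om2 Y \<le> Rev Om1 X + (2 * M + 1) * e"
    unfolding Rev_def[of Om2 Y] by (rule cSup_least[OF ne le])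
  then show ?thesis unfolding e_def .
qed

theorem proposition6:
  fixes Omega1 :: "'w measure" and Omega2 :: "'v measure"
    and X :: "'w \<Rightarrow> real^'k" and Y :: "'v \<Rightarrow> real^'k" and M :: real
  assumes "good_random_valuation Omega1 X" and "good_random_valuation Omega2 Y"
    and "M \<ge> 1"
    and "AE w in Omega1. norm1 (X w) \<le> M"
    and "AE w in Omega2. norm1 (Y w) \<le> M"
  shows "\<bar>Rev Omega1 X - Rev Omega2 Y\<bar> \<le> (2 * M + 1) * sqrt (Dist Omega1 X Omega2 Y)"
proof -
  note gX = assms(1) and gY = assms(2) and M = assms(3) and aeX = assms(4) and aeY = assms(5)
  define c where "c = 2 * M + 1"
  have c0: "0 < c" unfolding c_def using M by simp
  define S where "S = {\<rho>. \<rho> > 0 \<and> (\<forall>A\<in>sets borel.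
       measure (distr Omega1 borel X) A \<le> measure (distr Omega2 borel Y) (ball1 \<rho> A) + \<rho> \<and>
       measure (distr Omega2 borel Y) A \<le> measure (distr Omega1 borel X) (ball1 \<rho> A) + \<rho>)}"
  have D: "Dist Omega1 X Omega2 Y = Inf S" unfolding Dist_def prohorov_def S_def by simp
  have bnd: "\<bar>Rev Omega1 X - Rev Omega2 Y\<bar> \<le> c * sqrt \<rho>" if rS: "\<rho> \<in> S" for \<rho>
  proof -
    have rho: "0 < \<rho>" using rS unfolding S_def by auto
    have "Rev Omega2 Y \<le> Rev Omega1 X + (2 * M + 1) * sqrt \<rho>"
      by (rule one_side[OF gX gY M aeX aeY rho]) (use rS in \<open>auto simp: S_def\<close>)
    moreover have "Rev Omega1 X \<le> Rev Omega2 Y + (2 * M + 1) * sqrt \<rho>"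
      by (rule one_side[OF gY gX M aeY aeX rho]) (use rS in \<open>auto simp: S_def\<close>)
    ultimately show ?thesis unfolding c_def by (simp add: abs_le_iff)
  qed
  have P1: "prob_space (distr Omega1 borel X)"
    using gX unfolding good_random_valuation_def by (auto intro: prob_space.prob_space_distr)
  have P2: "prob_space (distr Omega2 borel Y)"
    using gY unfolding good_random_valuation_def by (auto intro: prob_space.prob_space_distr)
  have oneS: "1 \<in> S"
    unfolding S_def using prob_space.prob_le_1[OF P1] prob_space.prob_le_1[OF P2]
    by (auto intro: add_increasing)
  then have ne: "S \<noteq> {}" by auto
  have bdd: "bdd_below S" unfolding S_def by (intro bdd_belowI[of _ 0]) auto
  have D0: "0 \<le> Inf S" using ne by (intro cInf_greatest) (auto simp: S_def)
  show ?thesis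
  proof (rule ccontr)
    assume "\<not> ?thesis"
    then have gt: "c * sqrt (Inf S) < \<bar>Rev Omega1 X - Rev Omega2 Y\<bar>" unfolding c_def D by simp
    define t where "t = \<bar>Rev Omega1 X - Rev Omega2 Y\<bar> / c"
    have tgt: "sqrt (Inf S) < t" unfolding t_def using gt c0 by (simp add: field_simps)
    have t0: "0 < t" using tgt D0 by (meson le_less_trans real_sqrt_ge_zero)
    have "Inf S < t\<^sup>2"
    proof -
      have "sqrt (Inf S) < sqrt (t\<^sup>2)" using tgt t0 by simp
      then show ?thesis by (simp only: real_sqrt_less_iff)
    qed
    then obtain \<rho> where rS: "\<rho> \<in> S" and rl: "\<rho> < t\<^sup>2" using cInf_lessD[OF ne] by blast
    have "sqrt \<rho> < t"
    proof -
      have "sqrt \<rho> < sqrt (t\<^sup>2)" using rl by (rule real_sqrt_less_mono)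
      then show ?thesis using t0 by simp
    qed
    then have "c * sqrt \<rho> < c * t" using c0 by simp
    also have "c * t = \<bar>Rev Omega1 X - Rev Omega2 Y\<bar>" unfolding t_def using c0 by simp
    finally show False using bnd[OF rS] by simp
  qed
qed

end
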